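(* Let $\Lambda\ge2$ be an integer, let $q\in\mathbb C$ satisfy $|q-1|>1$, and set $t_0=1/(1-q)$, $\rho=|t_0|$. Suppose real numbers $r_1,\dots,r_{\Lambda-1}$ satisfy $\rho^2\le r_1\le r_2\le\cdots\le r_{\Lambda-1}\le\rho$ and, for $2\le s\le\Lambda-1$, $$r_s\ \ge\ \max\{|t_e\|_q t_f| : t_e\in D(r_k),\ t_f\in D(r_\ell),\ k,\ell\ge1,\ k+\ell=s\}.$$ Define $S_i=\{t_0\}\cup D(r_i)$ for $1\le i\le\Lambda-1$. Then $S_1\subseteq\cdots\subseteq S_{\Lambda-1}$ and: (1) $\{t t': t\in S_k,\ t'\in S_\ell\}\subseteq S_{\min(k,\ell)}$ for all $k,\ell\in\{1,\dots,\Lambda-1\}$; (2) for $k,\ell\ge1$ with $k+\ell\le\Lambda-1$ and all $t\in S_k$, $t'\in S_\ell$: $1+(q-1)tt'\ne0$ and $t\|_q t'\in S_{k+\ell}$; (3') $1\notin S_{\Lambda-1}$; (4) for $k,\ell\ge1$ with $k+\ell=\Lambda$ and all $t\in S_k$, $t'\in S_\ell$: $1+(q-1)tt'\ne0$.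
   Context: $D(r)=\{t\in\mathbb C:|t|\le r\}$. For $t,t'\in\mathbb C$ with $1+(q-1)tt'\ne0$, the parallel connection of transmissivities is $t\|_q t'=\dfrac{t+t'+(q-2)tt'}{1+(q-1)tt'}$ (this is always defined for $t,t'\in D(\rho)$ since $|q-1||tt'|\le\rho<1$). *)

theory Defs
  imports Complex_Main
begin

definition D :: "real \<Rightarrow> complex set" where
  "D r = {t. cmod t \<le> r}"

text \<open>Parallel connection of transmissivities (meaningful when the denominator is nonzero).\<close>
definition par :: "complex \<Rightarrow> complex \<Rightarrow> complex \<Rightarrow> complex" where
  "par q t t' = (t + t' + (q - 2) * t * t') / (1 + (q - 1) * t * t')"

definition S :: "complex \<Rightarrow> (nat \<Rightarrow> real) \<Rightarrow> nat \<Rightarrow> complex set" where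
  "S q r i = insert (1 / (1 - q)) (D (r i))"

end

theory Submission
  imports Defs
begin

lemma par_t0:
  fixes q t :: complex
  assumes "q \<noteq> 1" "t \<noteq> 1"
  shows "par q (1/(1-q)) t = 1/(1-q)" "par q t (1/(1-q)) = 1/(1-q)"
proof -
  define u where "u = 1/(1-q)"
  have a: "1 - q \<noteq> 0" "1 - t \<noteq> 0" using assms by auto
  have e: "(q - 1) * u = -1" unfolding u_def using a
    by (metis (no_types, lifting) divide_minus_right minus_diff_eq nonzero_mult_div_cancel_left mult.right_neutral times_divide_eq_right)
  have n: "u + t + (q - 2) * u * t = u * (1 - t) + t * (1 + (q - 1) * u)"
    by (simp add: algebra_simps)
  have d: "1 + (q - 1) * u * t = 1 - t" using e by simp
  show "par q (1/(1-q)) t = 1/(1-q)" unfolding par_def u_def[symmetric] using n d e a by simp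
  have n2: "t + u + (q - 2) * t * u = u * (1 - t) + t * (1 + (q - 1) * u)"
    by (simp add: algebra_simps)
  have d2: "1 + (q - 1) * t * u = 1 - t" using e by (simp add: mult.commute mult.left_commute)
  show "par q t (1/(1-q)) = 1/(1-q)" unfolding par_def u_def[symmetric] using n2 d2 e a by simp
qed

theorem proposition5p2:
  fixes \<Lambda> :: nat and q :: complex and r :: "nat \<Rightarrow> real"
  assumes hL: "\<Lambda> \<ge> 2"
    and hq: "cmod (q - 1) > 1"
    and hr1: "(cmod (1 / (1 - q)))\<^sup>2 \<le> r 1"
    and hmono: "\<And>i. 1 \<le> i \<Longrightarrow> i + 1 \<le> \<Lambda> - 1 \<Longrightarrow> r i \<le> r (i + 1)"
    and hrtop: "r (\<Lambda> - 1) \<le> cmod (1 / (1 - q))"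
    and hpar: "\<And>s k l te tf. 2 \<le> s \<Longrightarrow> s \<le> \<Lambda> - 1 \<Longrightarrow> 1 \<le> k \<Longrightarrow> 1 \<le> l \<Longrightarrow> k + l = s \<Longrightarrow>
                 te \<in> D (r k) \<Longrightarrow> tf \<in> D (r l) \<Longrightarrow> cmod (par q te tf) \<le> r s"
  shows "(\<forall>i. 1 \<le> i \<and> i + 1 \<le> \<Lambda> - 1 \<longrightarrow> S q r i \<subseteq> S q r (i + 1))
    \<and> (\<forall>k l. 1 \<le> k \<and> k \<le> \<Lambda> - 1 \<and> 1 \<le> l \<and> l \<le> \<Lambda> - 1 \<longrightarrow>
          {t * t' | t t'. t \<in> S q r k \<and> t' \<in> S q r l} \<subseteq> S q r (min k l))
    \<and> (\<forall>k l. 1 \<le> k \<and> 1 \<le> l \<and> k + l \<le> \<Lambda> - 1 \<longrightarrow>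
          (\<forall>t \<in> S q r k. \<forall>t' \<in> S q r l. 1 + (q - 1) * t * t' \<noteq> 0 \<and> par q t t' \<in> S q r (k + l)))
    \<and> 1 \<notin> S q r (\<Lambda> - 1)
    \<and> (\<forall>k l. 1 \<le> k \<and> 1 \<le> l \<and> k + l = \<Lambda> \<longrightarrow>
          (\<forall>t \<in> S q r k. \<forall>t' \<in> S q r l. 1 + (q - 1) * t * t' \<noteq> 0))"
proof -
  define \<rho> where "\<rho> = cmod (1 / (1 - q))"
  define t0 where "t0 = 1 / (1 - q)"
  have q1: "q \<noteq> 1" using hq by auto
  have rho_eq: "\<rho> = 1 / cmod (q - 1)"
    unfolding \<rho>_def by (simp add: norm_divide norm_minus_commute)
  have rpos: "\<rho> > 0" using rho_eq hq q1 by simp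
  have rlt: "\<rho> < 1" using rho_eq hq by (simp add: divide_less_eq)
  have prod1: "cmod (q - 1) * \<rho> = 1" using rho_eq hq q1 by simp
  have t0n: "cmod t0 = \<rho>" unfolding t0_def \<rho>_def by simp
  have mono: "r i \<le> r j" if "1 \<le> i" "i \<le> j" "j \<le> \<Lambda> - 1" for i j
    using that
  proof (induction j)
    case 0 then show ?case by simp
  next
    case (Suc j)
    show ?case
    proof (cases "i = Suc j")
      case True then show ?thesis by simp
    next
      case False
      then have "i \<le> j" using Suc by simp
      then have "r i \<le> r j" using Suc by simp
      also have "r j \<le> r (Suc j)" using hmono[of j] Suc \<open>i \<le> j\<close> by simp
      finally show ?thesis .
    qed
  qed
  have rlow: "\<rho>^2 \<le> r k" if "1 \<le> k" "k \<le> \<Lambda> - 1" for k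
    using mono[of 1 k] that hr1 unfolding \<rho>_def by simp
  have rhigh: "r k \<le> \<rho>" if "1 \<le> k" "k \<le> \<Lambda> - 1" for k
    using mono[of k "\<Lambda> - 1"] that hrtop unfolding \<rho>_def by simp
  have Sn: "cmod t \<le> \<rho>" if "t \<in> S q r k" "1 \<le> k" "k \<le> \<Lambda> - 1" for t k
    using that rhigh[of k] t0n unfolding S_def D_def t0_def by auto
  have nz: "1 + (q - 1) * t * t' \<noteq> 0" if "cmod t \<le> \<rho>" "cmod t' \<le> \<rho>" for t t'
  proof
    assume h: "1 + (q - 1) * t * t' = 0"
    have "cmod ((q - 1) * t * t') \<le> cmod (q - 1) * \<rho> * \<rho>"
      proof -
      have "cmod t * cmod t' \<le> \<rho> * \<rho>" using that rpos by (intro mult_mono) auto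
      then have "cmod (q - 1) * (cmod t * cmod t') \<le> cmod (q - 1) * (\<rho> * \<rho>)"
        by (intro mult_left_mono) auto
      then show ?thesis by (simp add: norm_mult mult.assoc)
    qed
    also have "\<dots> = \<rho>" using prod1 by simp
    finally have "cmod ((q - 1) * t * t') < 1" using rlt by simp
    moreover have "(q - 1) * t * t' = -1" using h by (simp add: add_eq_0_iff)
    ultimately show False by simp
  qed
  have ne1: "t \<noteq> 1" if "cmod t \<le> \<rho>" for t using that rlt by auto
  have c1: "\<forall>i. 1 \<le> i \<and> i + 1 \<le> \<Lambda> - 1 \<longrightarrow> S q r i \<subseteq> S q r (i + 1)"
    using hmono unfolding S_def D_def by fastforce
  have c2: "\<forall>k l. 1 \<le> k \<and> k \<le> \<Lambda> - 1 \<and> 1 \<le> l \<and> l \<le> \<Lambda> - 1 \<longrightarrow>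
          {t * t' | t t'. t \<in> S q r k \<and> t' \<in> S q r l} \<subseteq> S q r (min k l)"
  proof (intro allI impI subsetI)
    fix k l x assume kl: "1 \<le> k \<and> k \<le> \<Lambda> - 1 \<and> 1 \<le> l \<and> l \<le> \<Lambda> - 1"
      and "x \<in> {t * t' | t t'. t \<in> S q r k \<and> t' \<in> S q r l}"
    then obtain t t' where x: "x = t * t'" "t \<in> S q r k" "t' \<in> S q r l" by blast
    have "cmod x \<le> \<rho> * \<rho>" unfolding x(1) norm_mult
      using x Sn[of t k] Sn[of t' l] kl rpos by (intro mult_mono) auto
    also have "\<dots> \<le> r (min k l)" using rlow[of "min k l"] kl by (simp add: power2_eq_square min_def)
    finally show "x \<in> S q r (min k l)" unfolding S_def D_def by simp
  qed
  have c3: "\<forall>k l. 1 \<le> k \<and> 1 \<le> l \<and> k + l \<le> \<Lambda> - 1 \<longrightarrow>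
          (\<forall>t \<in> S q r k. \<forall>t' \<in> S q r l. 1 + (q - 1) * t * t' \<noteq> 0 \<and> par q t t' \<in> S q r (k + l))"
  proof (intro allI impI ballI conjI)
    fix k l t t' assume kl: "1 \<le> k \<and> 1 \<le> l \<and> k + l \<le> \<Lambda> - 1"
      and t: "t \<in> S q r k" and t': "t' \<in> S q r l"
    have a: "cmod t \<le> \<rho>" "cmod t' \<le> \<rho>" using Sn[OF t] Sn[OF t'] kl by auto
    show "1 + (q - 1) * t * t' \<noteq> 0" using nz a by simp
    show "par q t t' \<in> S q r (k + l)"
    proof (cases "t = t0 \<or> t' = t0")
      case True
      then have "par q t t' = t0" using par_t0[OF q1 ne1[OF a(1)]] par_t0[OF q1 ne1[OF a(2)]]
        unfolding t0_def by auto
      then show ?thesis unfolding S_def t0_def by simp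
    next
      case False
      then have "t \<in> D (r k)" "t' \<in> D (r l)" using t t' unfolding S_def t0_def by auto
      then have "cmod (par q t t') \<le> r (k + l)" using hpar[of "k+l" k l t t'] kl by simp
      then show ?thesis unfolding S_def D_def by simp
    qed
  qed
  have c4: "1 \<notin> S q r (\<Lambda> - 1)"
  proof
    assume "1 \<in> S q r (\<Lambda> - 1)"
    then have "cmod (1::complex) \<le> \<rho>" using Sn[of 1 "\<Lambda> - 1"] hL by simp
    then show False using rlt by simp
  qed
  have c5: "\<forall>k l. 1 \<le> k \<and> 1 \<le> l \<and> k + l = \<Lambda> \<longrightarrow>
          (\<forall>t \<in> S q r k. \<forall>t' \<in> S q r l. 1 + (q - 1) * t * t' \<noteq> 0)"
  proof (intro allI impI ballI)
    fix k l t t' assume kl: "1 \<le> k \<and> 1 \<le> l \<and> k + l = \<Lambda>"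
      and t: "t \<in> S q r k" and t': "t' \<in> S q r l"
    have a: "cmod t \<le> \<rho>" "cmod t' \<le> \<rho>" using Sn[OF t] Sn[OF t'] kl by auto
    show "1 + (q - 1) * t * t' \<noteq> 0" using nz a by simp
  qed
  show ?thesis using c1 c2 c3 c4 c5 by blast
qed

end
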